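(* Let $(X,0)$ be a pointed CFG-space over a Boolean algebra $B$, and let $U_1,U_2\subset X$ be subsets which are CFG-spaces with the restricted metric and satisfy $0\in U_1\cap U_2$. If $U_1$ is isometric to $U_2$, then $U_1^\perp$ is isometric to $U_2^\perp$.
   Context: A Boolean metric space over $B$ is a set $X$ with symmetric $d:X\times X\to B$, $d(x,y)=0$ iff $x=y$, and $d(x,z)\le d(x,y)\vee d(y,z)$. An isometry is a bijection preserving $d$. A partition of $B$ is a finite family of pairwise disjoint elements with supremum $1$; $x$ is a convex combination of $x_0,\dots,x_n$ with coefficients a partition $a_0,\dots,a_n$ if $a_i\wedge d(x,x_i)=0$ for all $i$. A CFG-space is a Boolean metric space that is convex (every such convex combination of its points exists in it) and finitely generated (some finite subset $S$ has every point as a convex combination of points of $S$). A pointed space is a pair $(X,0)$ with $0\in X$ a fixed point; write $|x|=d(x,0)$. Elements $x,y$ are orthogonal, $x\perp y$, if $d(x,y)=|x|\vee|y|$. For $U\subset X$ with $0\in U$, $U^\perp=\{y\in X: x\perp y\ \forall x\in U\}$ (with the restricted metric). *)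

theory Defs
  imports Main
begin

text \<open>Boolean metric spaces over a Boolean algebra 'b, with carrier X :: 'a set
  and distance d :: 'a => 'a => 'b (only its values on X matter).\<close>

definition bool_metric_space :: "'a set \<Rightarrow> ('a \<Rightarrow> 'a \<Rightarrow> 'b::boolean_algebra) \<Rightarrow> bool" where
  "bool_metric_space X d \<longleftrightarrow>
     (\<forall>x\<in>X. \<forall>y\<in>X. d x y = d y x) \<and>
     (\<forall>x\<in>X. \<forall>y\<in>X. d x y = bot \<longleftrightarrow> x = y) \<and>
     (\<forall>x\<in>X. \<forall>y\<in>X. \<forall>z\<in>X. d x z \<le> sup (d x y) (d y z))"

definition is_partition :: "nat \<Rightarrow> (nat \<Rightarrow> 'b::boolean_algebra) \<Rightarrow> bool" where
  "is_partition n a \<longleftrightarrow>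
     (\<forall>i\<le>n. \<forall>j\<le>n. i \<noteq> j \<longrightarrow> inf (a i) (a j) = bot) \<and>
     Sup_fin (a ` {..n}) = top"

definition is_convex_comb ::
  "('a \<Rightarrow> 'a \<Rightarrow> 'b::boolean_algebra) \<Rightarrow> 'a \<Rightarrow> nat \<Rightarrow> (nat \<Rightarrow> 'b) \<Rightarrow> (nat \<Rightarrow> 'a) \<Rightarrow> bool" where
  "is_convex_comb d x n a xs \<longleftrightarrow> is_partition n a \<and> (\<forall>i\<le>n. inf (a i) (d x (xs i)) = bot)"

definition bms_convex :: "'a set \<Rightarrow> ('a \<Rightarrow> 'a \<Rightarrow> 'b::boolean_algebra) \<Rightarrow> bool" where
  "bms_convex X d \<longleftrightarrow>
     (\<forall>n a xs. is_partition n a \<and> (\<forall>i\<le>n. xs i \<in> X) \<longrightarrow>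
        (\<exists>x\<in>X. is_convex_comb d x n a xs))"

definition bms_fin_gen :: "'a set \<Rightarrow> ('a \<Rightarrow> 'a \<Rightarrow> 'b::boolean_algebra) \<Rightarrow> bool" where
  "bms_fin_gen X d \<longleftrightarrow>
     (\<exists>S. finite S \<and> S \<subseteq> X \<and>
        (\<forall>x\<in>X. \<exists>n a xs. (\<forall>i\<le>n. xs i \<in> S) \<and> is_convex_comb d x n a xs))"

definition CFG_space :: "'a set \<Rightarrow> ('a \<Rightarrow> 'a \<Rightarrow> 'b::boolean_algebra) \<Rightarrow> bool" where
  "CFG_space X d \<longleftrightarrow> bool_metric_space X d \<and> bms_convex X d \<and> bms_fin_gen X d"

definition isometric :: "('a \<Rightarrow> 'a \<Rightarrow> 'b) \<Rightarrow> 'a set \<Rightarrow> 'a set \<Rightarrow> bool" where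
  "isometric d U V \<longleftrightarrow>
     (\<exists>f. bij_betw f U V \<and> (\<forall>x\<in>U. \<forall>y\<in>U. d (f x) (f y) = d x y))"

definition orth :: "('a \<Rightarrow> 'a \<Rightarrow> 'b::boolean_algebra) \<Rightarrow> 'a \<Rightarrow> 'a \<Rightarrow> 'a \<Rightarrow> bool" where
  "orth d z x y \<longleftrightarrow> d x y = sup (d x z) (d y z)"

definition perp :: "'a set \<Rightarrow> ('a \<Rightarrow> 'a \<Rightarrow> 'b::boolean_algebra) \<Rightarrow> 'a \<Rightarrow> 'a set \<Rightarrow> 'a set" where
  "perp X d z U = {y \<in> X. \<forall>x\<in>U. orth d z x y}"

end

theory Submission
  imports Defs
begin

lemma ba_disj_iff: "inf (r::'b::boolean_algebra) c = bot \<longleftrightarrow> r \<le> - c"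
  using shunt1[of r c bot] by (simp add: bot_unique)

lemma partition_bot:
  assumes "is_partition n a" "\<forall>i\<le>n. inf (a i) (c::'b::boolean_algebra) = bot"
  shows "c = bot"
proof -
  have "Sup_fin (a ` {..n}) \<le> - c"
    by (rule Sup_fin.boundedI) (use assms(2) ba_disj_iff in auto)
  then have "top \<le> - c" using assms(1) unfolding is_partition_def by simp
  then have "- c = top" using top_unique by blast
  then show ?thesis by (metis double_compl compl_top_eq)
qed

locale BMS =
  fixes X :: "'a set" and d :: "'a \<Rightarrow> 'a \<Rightarrow> 'b::boolean_algebra"
  assumes bms: "bool_metric_space X d" and cvx: "bms_convex X d"
begin

lemma dsym: "x \<in> X \<Longrightarrow> y \<in> X \<Longrightarrow> d x y = d y x"
  using bms unfolding bool_metric_space_def by blast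
lemma deq: "x \<in> X \<Longrightarrow> y \<in> X \<Longrightarrow> d x y = bot \<longleftrightarrow> x = y"
  using bms unfolding bool_metric_space_def by blast
lemma dself[simp]: "x \<in> X \<Longrightarrow> d x x = bot"
  using deq by blast
lemma tri: "x \<in> X \<Longrightarrow> y \<in> X \<Longrightarrow> z \<in> X \<Longrightarrow> d x z \<le> sup (d x y) (d y z)"
  using bms unfolding bool_metric_space_def by blast

definition eqon :: "'b \<Rightarrow> 'a \<Rightarrow> 'a \<Rightarrow> bool" where
  "eqon r x y \<longleftrightarrow> inf r (d x y) = bot"

lemma eqon_le: "eqon r x y \<longleftrightarrow> r \<le> - d x y"
  unfolding eqon_def by (rule ba_disj_iff)

lemma eqon_mono: "r' \<le> r \<Longrightarrow> eqon r x y \<Longrightarrow> eqon r' x y"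
  unfolding eqon_le by auto

lemma eqon_sym: "x \<in> X \<Longrightarrow> y \<in> X \<Longrightarrow> eqon r x y \<Longrightarrow> eqon r y x"
  unfolding eqon_def using dsym by simp

lemma eqon_trans:
  assumes "x \<in> X" "y \<in> X" "w \<in> X" "eqon r x y" "eqon r y w"
  shows "eqon r x w"
proof -
  have "inf r (d x w) \<le> inf r (sup (d x y) (d y w))"
    using tri[OF assms(1-3)] inf_mono by blast
  also have "\<dots> = sup (inf r (d x y)) (inf r (d y w))" by (simp add: inf_sup_distrib1)
  also have "\<dots> = bot" using assms(4,5) unfolding eqon_def by simp
  finally show ?thesis unfolding eqon_def using bot_unique by blast
qed

lemma eqon_split: "eqon (inf r c) x y \<Longrightarrow> eqon (inf r (- c)) x y \<Longrightarrow> eqon r x y"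
proof -
  assume "eqon (inf r c) x y" "eqon (inf r (- c)) x y"
  then have "sup (inf r c) (inf r (- c)) \<le> - d x y" unfolding eqon_le by simp
  moreover have "sup (inf r c) (inf r (- c)) = r" by (simp add: inf_sup_distrib1[symmetric])
  ultimately show ?thesis unfolding eqon_le by simp
qed

lemma eqon_top: "x \<in> X \<Longrightarrow> y \<in> X \<Longrightarrow> eqon top x y \<Longrightarrow> x = y"
  unfolding eqon_def using deq by simp

lemma eqon_bot: "eqon bot x y"
  unfolding eqon_def by simp

lemma eqon_refl: "x \<in> X \<Longrightarrow> eqon r x x"
  unfolding eqon_def by simp

lemma eqon_dist:
  assumes "x \<in> X" "x' \<in> X" "y \<in> X" "eqon r x x'"
  shows "inf r (d x y) = inf r (d x' y)"
proof -
  have "inf r (d x y) \<le> inf r (d x' y)"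
  proof -
    have "inf r (d x y) \<le> inf r (sup (d x x') (d x' y))"
      using tri[OF assms(1,2,3)] inf_mono by blast
    also have "\<dots> = sup (inf r (d x x')) (inf r (d x' y))" by (simp add: inf_sup_distrib1)
    also have "\<dots> = inf r (d x' y)" using assms(4) unfolding eqon_def by simp
    finally show ?thesis .
  qed
  moreover have "inf r (d x' y) \<le> inf r (d x y)"
  proof -
    have "inf r (d x' y) \<le> inf r (sup (d x' x) (d x y))"
      using tri[OF assms(2,1,3)] inf_mono by blast
    also have "\<dots> = sup (inf r (d x' x)) (inf r (d x y))" by (simp add: inf_sup_distrib1)
    also have "\<dots> = inf r (d x y)" using assms(4) dsym[OF assms(1,2)] unfolding eqon_def by simp
    finally show ?thesis .
  qed
  ultimately show ?thesis by (rule antisym)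
qed

lemma eqon_le_d: "x \<in> X \<Longrightarrow> y \<in> X \<Longrightarrow> a \<in> X \<Longrightarrow> eqon r x y \<Longrightarrow> r \<le> d x a \<Longrightarrow> r \<le> d y a"
  using eqon_dist[of x y a r] by (metis inf.absorb_iff1 inf.orderI)
lemma eqon_le_nd: "x \<in> X \<Longrightarrow> y \<in> X \<Longrightarrow> a \<in> X \<Longrightarrow> eqon r x y \<Longrightarrow> r \<le> - d x a \<Longrightarrow> r \<le> - d y a"
  using eqon_dist[of x y a r] by (metis ba_disj_iff)

lemma glue_ex:
  assumes Y: "bms_convex Y d" and "x \<in> Y" "y \<in> Y"
  shows "\<exists>w\<in>Y. eqon c w x \<and> eqon (- c) w y"
proof -
  define a where "a = (\<lambda>i::nat. if i = 0 then c else - c)"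
  define xs where "xs = (\<lambda>i::nat. if i = 0 then x else y)"
  have at: "{..Suc 0} = {0, Suc 0}" by auto
  have "is_partition 1 a"
    unfolding is_partition_def a_def by (auto simp: at inf_commute)
  moreover have "\<forall>i\<le>1. xs i \<in> Y" using assms unfolding xs_def by auto
  ultimately obtain w where "w \<in> Y" "is_convex_comb d w 1 a xs"
    using Y unfolding bms_convex_def by blast
  then have "inf (a 0) (d w (xs 0)) = bot" "inf (a 1) (d w (xs 1)) = bot"
    unfolding is_convex_comb_def by auto
  then have "eqon c w x" "eqon (- c) w y" unfolding eqon_def a_def xs_def by auto
  then show ?thesis using \<open>w \<in> Y\<close> by blast
qed

definition glue :: "'b \<Rightarrow> 'a \<Rightarrow> 'a \<Rightarrow> 'a" where
  "glue c x y = (SOME w. w \<in> X \<and> eqon c w x \<and> eqon (- c) w y)"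

lemma glue_uniq:
  assumes "w \<in> X" "w' \<in> X" "eqon c w w'" "eqon (- c) w w'" shows "w = w'"
  using eqon_split[of top c w w'] assms eqon_top by simp

lemma glue:
  assumes "x \<in> X" "y \<in> X"
  shows "glue c x y \<in> X" "eqon c (glue c x y) x" "eqon (- c) (glue c x y) y"
proof -
  have "\<exists>w. w \<in> X \<and> eqon c w x \<and> eqon (- c) w y" using glue_ex[OF cvx assms] by blast
  then have "glue c x y \<in> X \<and> eqon c (glue c x y) x \<and> eqon (- c) (glue c x y) y"
    unfolding glue_def by (rule someI_ex)
  then show "glue c x y \<in> X" "eqon c (glue c x y) x" "eqon (- c) (glue c x y) y" by auto
qed

lemma glue_in:
  assumes Y: "bms_convex Y d" "Y \<subseteq> X" and "x \<in> Y" "y \<in> Y"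
  shows "glue c x y \<in> Y"
proof -
  obtain w where w: "w\<in>Y" "eqon c w x" "eqon (- c) w y" using glue_ex[OF assms(1,3,4)] by blast
  have xy: "x \<in> X" "y \<in> X" "w \<in> X" using assms w by auto
  have "glue c x y = w"
  proof (rule glue_uniq)
    show "glue c x y \<in> X" "w \<in> X" using glue xy by auto
    show "eqon c (glue c x y) w"
      using eqon_trans[OF glue(1)[OF xy(1,2)] xy(1) xy(3) glue(2)[OF xy(1,2)] eqon_sym[OF xy(3,1) w(2)]] .
    show "eqon (- c) (glue c x y) w"
      using eqon_trans[OF glue(1)[OF xy(1,2)] xy(2) xy(3) glue(3)[OF xy(1,2)] eqon_sym[OF xy(3,2) w(3)]] .
  qed
  then show ?thesis using w by simp
qed

definition sw :: "'a \<Rightarrow> 'a \<Rightarrow> 'a \<Rightarrow> 'a" where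
  "sw a b x = glue (- d x a) b (glue (- d x b) a x)"

lemma sw_in: "a \<in> X \<Longrightarrow> b \<in> X \<Longrightarrow> x \<in> X \<Longrightarrow> sw a b x \<in> X"
  unfolding sw_def using glue by simp

lemma sw_inY: "bms_convex Y d \<Longrightarrow> Y \<subseteq> X \<Longrightarrow> a \<in> Y \<Longrightarrow> b \<in> Y \<Longrightarrow> x \<in> Y \<Longrightarrow> sw a b x \<in> Y"
  unfolding sw_def by (intro glue_in) (auto intro: glue_in)

context
  fixes a b assumes ab: "a \<in> X" "b \<in> X"
begin

lemma S1: "x \<in> X \<Longrightarrow> eqon (- d x a) (sw a b x) b"
  unfolding sw_def using glue ab by simp

lemma S2: assumes "x \<in> X" shows "eqon (inf (d x a) (- d x b)) (sw a b x) a"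
proof -
  have g: "glue (- d x b) a x \<in> X" "eqon (- d x b) (glue (- d x b) a x) a" using glue ab assms by auto
  have "eqon (d x a) (sw a b x) (glue (- d x b) a x)"
    unfolding sw_def using glue[OF ab(2) g(1), of "- d x a"] by simp
  then show ?thesis
    using eqon_trans[OF sw_in[OF ab assms] g(1) ab(1)] eqon_mono g(2)
    by (meson inf_le1 inf_le2)
qed

lemma S3: assumes "x \<in> X" shows "eqon (inf (d x a) (d x b)) (sw a b x) x"
proof -
  have g: "glue (- d x b) a x \<in> X" "eqon (d x b) (glue (- d x b) a x) x"
    using glue[OF ab(1) assms, of "- d x b"] by auto
  have "eqon (d x a) (sw a b x) (glue (- d x b) a x)"
    unfolding sw_def using glue[OF ab(2) g(1), of "- d x a"] by simp
  then show ?thesis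
    using eqon_trans[OF sw_in[OF ab assms] g(1) assms] eqon_mono g(2)
    by (meson inf_le1 inf_le2)
qed


lemma eqon_sym': "x \<in> X \<Longrightarrow> y \<in> X \<Longrightarrow> eqon r x y \<Longrightarrow> r' \<le> r \<Longrightarrow> eqon r' y x"
  using eqon_sym eqon_mono by blast

lemma sw_a: "sw a b a = b"
  using S1[OF ab(1)] ab eqon_top[OF sw_in[OF ab ab(1)] ab(2)] by simp

lemma eqon_self_d: "x \<in> X \<Longrightarrow> y \<in> X \<Longrightarrow> eqon (- d x y) x y"
  unfolding eqon_def by (simp add: inf_commute)

lemma sw_b: "sw a b b = a"
proof -
  have sb: "sw a b b \<in> X" using sw_in ab by simp
  have 1: "eqon (inf top (- d b a)) (sw a b b) a"
    using eqon_trans[OF sb ab(2) ab(1) S1[OF ab(2)] eqon_self_d[OF ab(2,1)]] by simp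
  have 2: "eqon (inf top (- (- d b a))) (sw a b b) a"
    using S2[OF ab(2)] ab by simp
  show ?thesis using eqon_split[OF 1 2] eqon_top sb ab by simp
qed

lemma sw_fix: assumes c: "c \<in> X" and e: "d a c = d b c" shows "sw a b c = c"
proof -
  have sc: "sw a b c \<in> X" using sw_in ab c by simp
  have 1: "eqon (inf top (- d c a)) (sw a b c) c"
  proof -
    have "eqon (- d c a) b c" unfolding eqon_def using e dsym[OF ab(1) c] dsym[OF ab(2) c]
      by (simp add: inf_commute)
    then show ?thesis using eqon_trans[OF sc ab(2) c S1[OF c]] by simp
  qed
  have 2: "eqon (inf (d c a) (- d c b)) (sw a b c) c"
    using e dsym[OF ab(1) c] dsym[OF ab(2) c] eqon_bot by simp
  have 3: "eqon (inf (d c a) (- (- d c b))) (sw a b c) c" using S3[OF c] by simp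
  have "eqon (d c a) (sw a b c) c" using eqon_split[OF 2 3] .
  then have 4: "eqon (inf top (- (- d c a))) (sw a b c) c" by simp
  show ?thesis using eqon_split[OF 1 4] eqon_top sc c by simp
qed

lemma sw_invol: assumes x: "x \<in> X" shows "sw a b (sw a b x) = x"
proof -
  define x' where "x' = sw a b x"
  have x': "x' \<in> X" unfolding x'_def using sw_in ab x by simp
  have x'': "sw a b x' \<in> X" using sw_in ab x' by simp
  define R1 where "R1 = - d x a"
  have e1: "eqon R1 x' b" "eqon R1 x a" unfolding x'_def R1_def using S1[OF x] eqon_self_d[OF x ab(1)] by auto
  have A: "eqon (inf R1 (- d x' a)) (sw a b x') x"
  proof -
    have "eqon (inf R1 (- d x' a)) (sw a b x') b" using eqon_mono[OF _ S1[OF x']] by simp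
    moreover have "eqon (inf R1 (- d x' a)) b x'" using eqon_sym'[OF x' ab(2) e1(1)] by simp
    moreover have "eqon (inf R1 (- d x' a)) x' a" using eqon_mono[OF _ eqon_self_d[OF x' ab(1)]] by simp
    moreover have "eqon (inf R1 (- d x' a)) a x" using eqon_sym'[OF x ab(1) e1(2)] by simp
    ultimately show ?thesis using eqon_trans x' x'' x ab by meson
  qed
  have B: "eqon (inf R1 (- (- d x' a))) (sw a b x') x"
  proof -
    have "R1 \<le> - d x' b" using e1(1) eqon_le by simp
    then have "inf R1 (- (- d x' a)) \<le> inf (d x' a) (- d x' b)" by (simp add: le_infI1 le_infI2 inf_commute)
    then have "eqon (inf R1 (- (- d x' a))) (sw a b x') a" using S2[OF x'] eqon_mono by blast
    moreover have "eqon (inf R1 (- (- d x' a))) a x" using eqon_sym'[OF x ab(1) e1(2)] by simp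
    ultimately show ?thesis using eqon_trans x'' x ab by meson
  qed
  have C: "eqon (inf (d x a) (- d x b)) (sw a b x') x"
  proof -
    have e2: "eqon (inf (d x a) (- d x b)) x' a" unfolding x'_def using S2[OF x] .
    then have "inf (d x a) (- d x b) \<le> - d x' a" using eqon_le by simp
    then have "eqon (inf (d x a) (- d x b)) (sw a b x') b" using S1[OF x'] eqon_mono by blast
    moreover have "eqon (inf (d x a) (- d x b)) b x"
      using eqon_mono[OF _ eqon_self_d[OF x ab(2)]] eqon_sym[OF x ab(2)] by simp
    ultimately show ?thesis using eqon_trans x'' x ab by meson
  qed
  have D: "eqon (inf (d x a) (- (- d x b))) (sw a b x') x"
  proof -
    let ?R = "inf (d x a) (- (- d x b))"
    have e3: "eqon ?R x' x" unfolding x'_def using S3[OF x] by simp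
    have "?R \<le> d x' a" using eqon_le_d[OF x x' ab(1) eqon_sym[OF x' x e3]] by simp
    moreover have "?R \<le> d x' b" using eqon_le_d[OF x x' ab(2) eqon_sym[OF x' x e3]] by simp
    ultimately have "?R \<le> inf (d x' a) (d x' b)" by simp
    then have "eqon ?R (sw a b x') x'" using S3[OF x'] eqon_mono by blast
    then show ?thesis using eqon_trans[OF x'' x' x _ e3] by simp
  qed
  have "eqon R1 (sw a b x') x" using eqon_split[OF A B] .
  moreover have "eqon (- R1) (sw a b x') x" using eqon_split[OF C D] unfolding R1_def by simp
  ultimately have "eqon (inf top R1) (sw a b x') x" "eqon (inf top (- R1)) (sw a b x') x" by auto
  then show ?thesis using eqon_split eqon_top x x'' unfolding x'_def by blast
qed

lemma sw_le: assumes x: "x \<in> X" and y: "y \<in> X" shows "eqon (- d x y) (sw a b x) (sw a b y)"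
proof -
  let ?c = "- d x y"
  have sx: "sw a b x \<in> X" and sy: "sw a b y \<in> X" using sw_in ab x y by auto
  have cxy: "eqon ?c x y" using eqon_self_d[OF x y] .
  have A: "eqon (inf ?c (- d x a)) (sw a b x) (sw a b y)"
  proof -
    let ?R = "inf ?c (- d x a)"
    have "?R \<le> - d y a" using eqon_le_nd[OF x y ab(1) eqon_mono[OF _ cxy]] by simp
    then have "eqon ?R (sw a b y) b" using S1[OF y] eqon_mono by blast
    moreover have "eqon ?R (sw a b x) b" using eqon_mono[OF _ S1[OF x]] by simp
    ultimately show ?thesis using eqon_trans[OF sx ab(2) sy] eqon_sym[OF sy ab(2)] by blast
  qed
  have B: "eqon (inf (inf ?c (- (- d x a))) (- d x b)) (sw a b x) (sw a b y)"
  proof -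
    let ?R = "inf (inf ?c (- (- d x a))) (- d x b)"
    have r: "eqon ?R x y" using eqon_mono[OF _ cxy] by (simp add: le_infI1)
    have "?R \<le> d y a" using eqon_le_d[OF x y ab(1) r] by (simp add: le_infI1)
    moreover have "?R \<le> - d y b" using eqon_le_nd[OF x y ab(2) r] by simp
    ultimately have "?R \<le> inf (d y a) (- d y b)" by simp
    then have "eqon ?R (sw a b y) a" using S2[OF y] eqon_mono by blast
    moreover have "eqon ?R (sw a b x) a" using S2[OF x] eqon_mono[of ?R "inf (d x a) (- d x b)"]
      by (simp add: le_infI1 inf.coboundedI2)
    ultimately show ?thesis using eqon_trans[OF sx ab(1) sy] eqon_sym[OF sy ab(1)] by blast
  qed
  have C: "eqon (inf (inf ?c (- (- d x a))) (- (- d x b))) (sw a b x) (sw a b y)"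
  proof -
    let ?R = "inf (inf ?c (- (- d x a))) (- (- d x b))"
    have r: "eqon ?R x y" using eqon_mono[OF _ cxy] by (simp add: le_infI1)
    have "?R \<le> d y a" using eqon_le_d[OF x y ab(1) r] by (simp add: le_infI1)
    moreover have "?R \<le> d y b" using eqon_le_d[OF x y ab(2) r] by simp
    ultimately have "?R \<le> inf (d y a) (d y b)" by simp
    then have "eqon ?R (sw a b y) y" using S3[OF y] eqon_mono by blast
    moreover have "eqon ?R (sw a b x) x" using S3[OF x] eqon_mono[of ?R "inf (d x a) (d x b)"]
      by (simp add: le_infI1 inf.coboundedI2)
    ultimately show ?thesis using eqon_trans[OF sx x sy _ eqon_trans[OF x y sy r eqon_sym[OF sy y]]] by blast
  qed
  show ?thesis using eqon_split[OF A eqon_split[OF B C]] .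
qed

lemma sw_iso: assumes x: "x \<in> X" and y: "y \<in> X" shows "d (sw a b x) (sw a b y) = d x y"
proof -
  have sx: "sw a b x \<in> X" and sy: "sw a b y \<in> X" using sw_in ab x y by auto
  have 1: "d (sw a b x) (sw a b y) \<le> d x y"
    using sw_le[OF x y] eqon_le by (metis compl_le_compl_iff eqon_def ba_disj_iff)
  have "d (sw a b (sw a b x)) (sw a b (sw a b y)) \<le> d (sw a b x) (sw a b y)"
    using sw_le[OF sx sy] eqon_le by (metis compl_le_compl_iff eqon_def ba_disj_iff)
  then have 2: "d x y \<le> d (sw a b x) (sw a b y)" using sw_invol x y by simp
  show ?thesis using 1 2 by simp
qed

lemma sw_bij: "bij_betw (sw a b) X X"
  by (rule bij_betw_byWitness[where f'="sw a b"]) (auto simp: sw_invol sw_in ab)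

end

lemma ext:
  assumes "finite T" "T \<subseteq> D" "D \<subseteq> X" "\<forall>t\<in>D. h t \<in> X"
    "\<forall>x\<in>D. \<forall>y\<in>D. d (h x) (h y) = d x y"
  shows "\<exists>g. bij_betw g X X \<and> (\<forall>x\<in>X. \<forall>y\<in>X. d (g x) (g y) = d x y) \<and> (\<forall>t\<in>T. g t = h t)"
  using assms(1,2)
proof (induction T rule: finite_induct)
  case empty
  have "bij_betw (\<lambda>x. x) X X" by (simp add: bij_betw_def)
  then show ?case by (intro exI[of _ "\<lambda>x. x"]) simp
next
  case (insert s T)
  then obtain g where g: "bij_betw g X X" "\<forall>x\<in>X. \<forall>y\<in>X. d (g x) (g y) = d x y" "\<forall>t\<in>T. g t = h t"
    by auto
  have s: "s \<in> D" "s \<in> X" using insert assms by auto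
  have gs: "g s \<in> X" using g(1) s bij_betwE by blast
  have hs: "h s \<in> X" using assms s by auto
  define g' where "g' = sw (g s) (h s) \<circ> g"
  have "bij_betw g' X X" unfolding g'_def using bij_betw_trans[OF g(1) sw_bij[OF gs hs]] .
  moreover have "\<forall>x\<in>X. \<forall>y\<in>X. d (g' x) (g' y) = d x y"
  proof (intro ballI)
    fix x y assume xy: "x \<in> X" "y \<in> X"
    then have "g x \<in> X" "g y \<in> X" using g(1) bij_betwE by blast+
    then show "d (g' x) (g' y) = d x y" unfolding g'_def using g(2) xy sw_iso[OF gs hs] by simp
  qed
  moreover have "\<forall>t\<in>insert s T. g' t = h t"
  proof
    fix t assume t: "t \<in> insert s T"
    show "g' t = h t"
    proof (cases "t = s")
      case True then show ?thesis unfolding g'_def using sw_a[OF gs hs] by simp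
    next
      case False
      then have tT: "t \<in> T" using t by simp
      then have tD: "t \<in> D" "t \<in> X" using insert assms by auto
      have ht: "h t \<in> X" using assms tD by auto
      have "d (g s) (h t) = d (g s) (g t)" using g(3) tT by simp
      also have "\<dots> = d s t" using g(2) s tD by simp
      also have "\<dots> = d (h s) (h t)" using assms(5) s tD by simp
      finally have "d (g s) (h t) = d (h s) (h t)" .
      then show ?thesis unfolding g'_def using sw_fix[OF gs hs ht] g(3) tT by simp
    qed
  qed
  ultimately show ?case by blast
qed

lemma comb_uniq:
  assumes "u \<in> X" "v \<in> X" "is_convex_comb d u n a xs" "is_convex_comb d v n a ys"
    "\<forall>i\<le>n. xs i \<in> X \<and> ys i \<in> X \<and> inf (a i) (d (xs i) (ys i)) = bot"
  shows "u = v"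
proof -
  have "\<forall>i\<le>n. inf (a i) (d u v) = bot"
  proof (intro allI impI)
    fix i assume i: "i \<le> n"
    have e1: "eqon (a i) u (xs i)" "eqon (a i) v (ys i)" "eqon (a i) (xs i) (ys i)"
      using assms(3,4,5) i unfolding is_convex_comb_def eqon_def by auto
    have "eqon (a i) u v"
      using eqon_trans[OF assms(1) _ assms(2) e1(1) eqon_trans[OF _ _ assms(2) e1(3) eqon_sym[OF assms(2) _ e1(2)]]]
        assms(5) i by auto
    then show "inf (a i) (d u v) = bot" unfolding eqon_def .
  qed
  then have "d u v = bot" using partition_bot assms(3) unfolding is_convex_comb_def by blast
  then show ?thesis using deq assms by simp
qed

end

theorem theorem3p1:
  fixes X :: "'a set" and d :: "'a \<Rightarrow> 'a \<Rightarrow> 'b::boolean_algebra" and z :: 'a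
    and U1 U2 :: "'a set"
  assumes "CFG_space X d" and "z \<in> X"
    and "U1 \<subseteq> X" and "U2 \<subseteq> X"
    and "CFG_space U1 d" and "CFG_space U2 d"
    and "z \<in> U1" and "z \<in> U2"
    and "isometric d U1 U2"
  shows "isometric d (perp X d z U1) (perp X d z U2)"
proof -
  interpret BMS X d using assms(1) unfolding CFG_space_def by unfold_locales auto
  obtain f where f: "bij_betw f U1 U2" "\<forall>x\<in>U1. \<forall>y\<in>U1. d (f x) (f y) = d x y"
    using assms(9) unfolding isometric_def by blast
  have c2: "bms_convex U2 d" using assms(6) unfolding CFG_space_def by simp
  have fz: "f z \<in> U2" using f(1) assms(7) bij_betwE by blast
  have zX: "z \<in> X" "f z \<in> X" using fz assms by auto
  define f' where "f' = (\<lambda>x. sw z (f z) (f x))"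
  have fU: "\<And>x. x \<in> U1 \<Longrightarrow> f x \<in> U2" using f(1) bij_betwE by blast
  have f'U: "\<And>x. x \<in> U1 \<Longrightarrow> f' x \<in> U2"
    unfolding f'_def using sw_inY[OF c2 assms(4) assms(8) fz] fU by blast
  have f'X: "\<forall>x\<in>U1. f' x \<in> X" using f'U assms(4) by blast
  have f'iso: "\<forall>x\<in>U1. \<forall>y\<in>U1. d (f' x) (f' y) = d x y"
  proof (intro ballI)
    fix x y assume xy: "x \<in> U1" "y \<in> U1"
    then have "f x \<in> X" "f y \<in> X" using fU assms(4) by auto
    then show "d (f' x) (f' y) = d x y" unfolding f'_def using sw_iso[OF zX] f(2) xy by simp
  qed
  have f'z: "f' z = z" unfolding f'_def using sw_b[OF zX] by simp
  have f'surj: "\<And>v. v \<in> U2 \<Longrightarrow> \<exists>u\<in>U1. f' u = v"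
  proof -
    fix v assume v: "v \<in> U2"
    have "sw z (f z) v \<in> U2" using sw_inY[OF c2 assms(4) assms(8) fz v] .
    moreover have "f ` U1 = U2" using f(1) by (simp add: bij_betw_def)
    ultimately obtain u where u: "u \<in> U1" "f u = sw z (f z) v" by (metis imageE)
    have "f' u = v" unfolding f'_def u(2) using sw_invol[OF zX] v assms(4) by auto
    then show "\<exists>u\<in>U1. f' u = v" using u by blast
  qed
  obtain S where S: "finite S" "S \<subseteq> U1"
    "\<forall>x\<in>U1. \<exists>n a xs. (\<forall>i\<le>n. xs i \<in> S) \<and> is_convex_comb d x n a xs"
    using assms(5) unfolding CFG_space_def bms_fin_gen_def by blast
  obtain g where g: "bij_betw g X X" "\<forall>x\<in>X. \<forall>y\<in>X. d (g x) (g y) = d x y" "\<forall>t\<in>S. g t = f' t"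
    using ext[OF S(1,2) assms(3) f'X f'iso] by blast
  have gX: "\<And>x. x \<in> X \<Longrightarrow> g x \<in> X" using g(1) bij_betwE by blast
  have gU: "\<And>u. u \<in> U1 \<Longrightarrow> g u = f' u"
  proof -
    fix u assume u: "u \<in> U1"
    obtain n a xs where nx: "\<forall>i\<le>n. xs i \<in> S" "is_convex_comb d u n a xs" using S(3) u by blast
    have xsU: "\<forall>i\<le>n. xs i \<in> U1" using nx S(2) by blast
    have uX: "u \<in> X" using u assms(3) by blast
    have xsX: "\<forall>i\<le>n. xs i \<in> X" using xsU assms(3) by blast
    show "g u = f' u"
    proof (rule comb_uniq)
      show "g u \<in> X" using gX uX .
      show "f' u \<in> X" using f'X u by blast
      show "is_convex_comb d (g u) n a (\<lambda>i. g (xs i))"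
        using nx(2) g(2) uX xsX unfolding is_convex_comb_def by simp
      show "is_convex_comb d (f' u) n a (\<lambda>i. g (xs i))"
        using nx g(3) f'iso u xsU unfolding is_convex_comb_def by simp
      show "\<forall>i\<le>n. g (xs i) \<in> X \<and> g (xs i) \<in> X \<and> inf (a i) (d (g (xs i)) (g (xs i))) = bot"
        using xsX gX by simp
    qed
  qed
  have gz: "g z = z" using gU[OF assms(7)] f'z by simp
  have img: "g ` perp X d z U1 = perp X d z U2"
  proof
    show "g ` perp X d z U1 \<subseteq> perp X d z U2"
    proof
      fix y' assume "y' \<in> g ` perp X d z U1"
      then obtain y where y: "y \<in> X" "\<forall>u\<in>U1. orth d z u y" "y' = g y" unfolding perp_def by blast
      have "\<forall>v\<in>U2. orth d z v (g y)"
      proof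
        fix v assume "v \<in> U2"
        then obtain u where u: "u \<in> U1" "f' u = v" using f'surj by blast
        have uX: "u \<in> X" using u assms(3) by blast
        have v: "v = g u" using gU u by simp
        have e: "d (g u) (g y) = d u y" "d (g u) (g z) = d u z" "d (g y) (g z) = d y z"
          using g(2) uX y(1) zX by auto
        have "orth d z u y" using y(2) u(1) by blast
        then show "orth d z v (g y)" unfolding orth_def v using e gz by simp
      qed
      then show "y' \<in> perp X d z U2" unfolding perp_def using y gX by simp
    qed
  next
    show "perp X d z U2 \<subseteq> g ` perp X d z U1"
    proof
      fix y' assume y': "y' \<in> perp X d z U2"
      then have "y' \<in> X" unfolding perp_def by simp
      moreover have "g ` X = X" using g(1) by (simp add: bij_betw_def)
      ultimately obtain y where y: "y \<in> X" "y' = g y" by (metis imageE)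
      have "\<forall>u\<in>U1. orth d z u y"
      proof
        fix u assume u: "u \<in> U1"
        have uX: "u \<in> X" using u assms(3) by blast
        have "g u \<in> U2" using gU[OF u] f'U[OF u] by simp
        then have "orth d z (g u) (g y)" using y' y unfolding perp_def by simp
        moreover have e: "d (g u) (g y) = d u y" "d (g u) (g z) = d u z" "d (g y) (g z) = d y z"
          using g(2) uX y(1) zX by auto
        ultimately show "orth d z u y" unfolding orth_def using gz by simp
      qed
      then show "y' \<in> g ` perp X d z U1" unfolding perp_def using y by blast
    qed
  qed
  have "inj_on g (perp X d z U1)"
  proof -
    have "perp X d z U1 \<subseteq> X" unfolding perp_def by blast
    then show ?thesis using g(1) inj_on_subset unfolding bij_betw_def by blast
  qed
  then have "bij_betw g (perp X d z U1) (perp X d z U2)" using img unfolding bij_betw_def by simp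
  moreover have "\<forall>x\<in>perp X d z U1. \<forall>y\<in>perp X d z U1. d (g x) (g y) = d x y"
    using g(2) unfolding perp_def by simp
  ultimately show ?thesis unfolding isometric_def by blast
qed

end
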